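(* Let $\mathcal P_1$ and $\mathcal P_2$ be two pairs of lines in the plane, the lines of $\mathcal P_1$ intersecting at ${\bf a}$ and those of $\mathcal P_2$ intersecting at ${\bf b}$, and let $A$ and $B$ be the cone matrices of the HR-cones generated by $\mathcal P_1$ and $\mathcal P_2$, respectively. Let $C=A-B$ and ${\bf c}=A{\bf a}-B{\bf b}$. If $A\neq B$, then $C$ is invertible and the rectangle locus for $\mathcal P_1$ and $\mathcal P_2$ is the set of all ${\bf x}\in\mathbb{R}^2$ such that $$({\bf x}-C^{-1}{\bf c})^TC({\bf x}-C^{-1}{\bf c})={\bf c}^TC^{-1}{\bf c}-{\bf a}^TA{\bf a}+{\bf b}^TB{\bf b}.$$
   Context: A pair of lines means two distinct lines; two pairs of lines are distinct pairs, possibly sharing one line. For a pair of distinct intersecting lines, the subset of $\mathbb{R}^3$ they generate (the set of $(x,y,\pm z)$ with $2z$ the length of a segment joining the two lines with midpoint $(x,y)$) is an HR-cone $\{(x,y,z): z^2=({\bf x}-{\bf a})^TA({\bf x}-{\bf a})\}$ with $A$ symmetric positive definite, $\det A=1$, and ${\bf a}$ the crossing point; $A$ is its cone matrix. The rectangle locus of two pairs $L_1,L_3$ and $L_2,L_4$ is the set of points $p$ that are the midpoint both of a segment joining $L_1$ and $L_3$ and of a segment joining $L_2$ and $L_4$, these two segments having equal length (equivalently, centers of possibly degenerate rectangles whose diagonals join the lines of the respective pairs). *)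

theory Defs
  imports "HOL-Analysis.Analysis"
begin

type_synonym pt = "real^2"

definition is_line :: "pt set \<Rightarrow> bool" where
  "is_line L \<longleftrightarrow> (\<exists>p d. d \<noteq> 0 \<and> L = {p + t *\<^sub>R d | t. True})"

definition crossing_pair :: "pt set \<Rightarrow> pt set \<Rightarrow> pt \<Rightarrow> bool" where
  "crossing_pair L M a \<longleftrightarrow> is_line L \<and> is_line M \<and> L \<noteq> M \<and> a \<in> L \<and> a \<in> M"

text \<open>The subset of R^3 = R^2 x R generated by a pair of lines:
  points (x, +-z) with 2z the length of a segment joining the lines with midpoint x.\<close>
definition generated_set :: "pt set \<Rightarrow> pt set \<Rightarrow> (pt \<times> real) set" where
  "generated_set L M = {(x, z) | x z. \<exists>p\<in>L. \<exists>q\<in>M. x = midpoint p q \<and> 2 * \<bar>z\<bar> = dist p q}"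

definition hr_cone :: "real^2^2 \<Rightarrow> pt \<Rightarrow> (pt \<times> real) set" where
  "hr_cone A a = {(x, z). z\<^sup>2 = (x - a) \<bullet> (A *v (x - a))}"

definition cone_matrix_ok :: "real^2^2 \<Rightarrow> bool" where
  "cone_matrix_ok A \<longleftrightarrow> transpose A = A \<and> (\<forall>v. v \<noteq> 0 \<longrightarrow> v \<bullet> (A *v v) > 0) \<and> det A = 1"

definition is_cone_matrix :: "pt set \<Rightarrow> pt set \<Rightarrow> pt \<Rightarrow> real^2^2 \<Rightarrow> bool" where
  "is_cone_matrix L M a A \<longleftrightarrow> cone_matrix_ok A \<and> generated_set L M = hr_cone A a"

definition rectangle_locus :: "pt set \<Rightarrow> pt set \<Rightarrow> pt set \<Rightarrow> pt set \<Rightarrow> pt set" where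
  "rectangle_locus L1 L3 L2 L4 =
     {p. \<exists>p1\<in>L1. \<exists>p3\<in>L3. \<exists>p2\<in>L2. \<exists>p4\<in>L4.
          p = midpoint p1 p3 \<and> p = midpoint p2 p4 \<and> dist p1 p3 = dist p2 p4}"

end

theory Submission
  imports Defs
begin

lemma real_key:
  fixes p q r s t u :: real
  assumes "p > 0" "s > 0" "p * r - q^2 = 1" "s * u - t^2 = 1" "(p - s) * (r - u) - (q - t) * (q - t) = 0"
  shows "p = s \<and> q = t \<and> r = u"
proof -
  have id: "p  *  s  *  ((p - s)  *  (r - u) - (q - t)  *  (q - t)) = - ((p - s)^2  +  (p  *  t - s  *  q)^2)"
  proof -
    have "p * s * ((p - s) * (r - u) - (q - t) * (q - t)) = p * s * (2 - (p * u + r * s - 2 * q * t)  +  (p * r - q^2 - 1)  +  (s * u - t^2 - 1))"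
      by (simp add: algebra_simps power2_eq_square)
    also have "\<dots> = 2 * p * s - p * p * (s * u) - s * s * (p * r)  +  2 * p * s * q * t"
    proof -
      have z1: "p * r - q^2 - 1 = 0" and z2: "s * u - t^2 - 1 = 0" using assms(3,4) by simp_all
      show ?thesis by (simp only: z1 z2 add_0_right) (simp add: algebra_simps)
    qed
    also have "\<dots> = 2 * p * s - p * p * (1 + t^2) - s * s * (1 + q^2)  +  2 * p * s * q * t"
    proof -
      have e1: "s * u = 1 + t^2" and e2: "p * r = 1 + q^2" using assms(3,4) by simp_all
      show ?thesis by (simp only: e1 e2)
    qed
    also have "\<dots> = -((p - s)^2  +  (p * t - s * q)^2)" by (simp add: algebra_simps power2_eq_square)
    finally show ?thesis .
  qed
  have "p * s * ((p - s) * (r - u) - (q - t) * (q - t)) = 0" by (simp only: assms(5) mult_zero_right)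
  hence "(p - s)^2  +  (p * t - s * q)^2 = 0" using id by linarith
  hence "p - s = 0 \<and> p * t - s * q = 0" by (simp only: sum_power2_eq_zero_iff)
  hence h1: "p - s = 0" and h2: "p * t - s * q = 0" by (rule conjunct1, rule conjunct2)
  have ps: "p = s" using h1 by (rule right_minus_eq[THEN iffD1])
  have pt: "p * t = s * q" using h2 by (rule right_minus_eq[THEN iffD1])
  have "s * t = s * q" using pt unfolding ps .
  hence qt: "q = t" using assms(2) by simp
  have "s * r = s * u" using assms(3,4) unfolding ps qt by linarith
  hence "r = u" using assms(2) by simp
  thus ?thesis using ps qt by simp
qed

lemma ok_facts:
  assumes "cone_matrix_ok A"
  shows "A$1$2 = A$2$1" "A$1$1 > 0" "A$1$1*A$2$2 - (A$1$2)^2 = 1" "\<And>v. v \<bullet> (A *v v) \<ge> 0"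
proof -
  have tr: "transpose A = A" and pd: "\<And>v. v \<noteq> 0 \<Longrightarrow> v \<bullet> (A *v v) > 0" and d: "det A = 1"
    using assms unfolding cone_matrix_ok_def by auto
  have "(transpose A)$1$2 = A$1$2" using tr by simp
  thus s: "A$1$2 = A$2$1" by (simp add: transpose_def)
  have "axis 1 (1::real) \<bullet> (A *v axis 1 1) > 0"
    by (rule pd) (simp add: axis_eq_0_iff)
  thus "A$1$1 > 0" by (simp add: inner_vec_def sum_2 matrix_vector_mult_def axis_def)
  show "A$1$1*A$2$2 - (A$1$2)^2 = 1" using d s by (simp add: det_2 power2_eq_square)
  show "v \<bullet> (A *v v) \<ge> 0" for v
  proof (cases "v = 0")
    case True thus ?thesis by simp
  next
    case False thus ?thesis using pd[OF False] by simp
  qed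
qed

lemma det_diff:
  assumes "cone_matrix_ok A" "cone_matrix_ok B" "A \<noteq> B"
  shows "invertible (A - B)"
proof (rule ccontr)
  assume "\<not> invertible (A - B)"
  hence "det (A - B) = 0" by (simp add: invertible_det_nz)
  hence "(A$1$1-B$1$1)*(A$2$2-B$2$2) - (A$1$2-B$1$2)*(A$1$2-B$1$2) = 0"
    using ok_facts(1)[OF assms(1)] ok_facts(1)[OF assms(2)] by (simp add: det_2)
  from real_key[OF ok_facts(2)[OF assms(1)] ok_facts(2)[OF assms(2)]
      ok_facts(3)[OF assms(1)] ok_facts(3)[OF assms(2)] this]
  have "A$1$1 = B$1$1" "A$1$2 = B$1$2" "A$2$2 = B$2$2" by auto
  moreover have "A$2$1 = B$2$1" using calculation ok_facts(1)[OF assms(1)] ok_facts(1)[OF assms(2)] by simp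
  ultimately have "A = B" by (simp add: vec_eq_iff forall_2)
  thus False using assms(3) by simp
qed

lemma locus_eq:
  assumes "is_cone_matrix L1 L3 a A" "is_cone_matrix L2 L4 b B"
  shows "rectangle_locus L1 L3 L2 L4 = {x. (x - a) \<bullet> (A *v (x - a)) = (x - b) \<bullet> (B *v (x - b))}"
proof -
  have gA: "generated_set L1 L3 = hr_cone A a" and gB: "generated_set L2 L4 = hr_cone B b"
    and okA: "cone_matrix_ok A" using assms unfolding is_cone_matrix_def by auto
  show ?thesis
  proof (intro set_eqI iffI)
    fix x assume "x \<in> rectangle_locus L1 L3 L2 L4"
    then obtain p1 p3 p2 p4 where m: "p1\<in>L1" "p3\<in>L3" "p2\<in>L2" "p4\<in>L4"
      "x = midpoint p1 p3" "x = midpoint p2 p4" "dist p1 p3 = dist p2 p4"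
      unfolding rectangle_locus_def by blast
    define z where "z = dist p1 p3 / 2"
    have "2 * \<bar>z\<bar> = dist p1 p3" unfolding z_def using m(7) by simp
    hence "\<exists>p\<in>L1. \<exists>q\<in>L3. x = midpoint p q \<and> 2 * \<bar>z\<bar> = dist p q"
      using m(1) m(2) m(5) by (intro bexI[of _ p3] bexI[of _ p1]) auto
    hence "(x, z) \<in> generated_set L1 L3" unfolding generated_set_def by simp
    hence 1: "z^2 = (x - a) \<bullet> (A *v (x - a))" using gA by (simp add: hr_cone_def)
    have "2 * \<bar>z\<bar> = dist p2 p4" unfolding z_def using m(7) by simp
    hence "\<exists>p\<in>L2. \<exists>q\<in>L4. x = midpoint p q \<and> 2 * \<bar>z\<bar> = dist p q"
      using m(3) m(4) m(6) by (intro bexI[of _ p4] bexI[of _ p2]) auto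
    hence "(x, z) \<in> generated_set L2 L4" unfolding generated_set_def by simp
    hence 2: "z^2 = (x - b) \<bullet> (B *v (x - b))" using gB by (simp add: hr_cone_def)
    show "x \<in> {x. (x - a) \<bullet> (A *v (x - a)) = (x - b) \<bullet> (B *v (x - b))}" using 1 2 by simp
  next
    fix x assume "x \<in> {x. (x - a) \<bullet> (A *v (x - a)) = (x - b) \<bullet> (B *v (x - b))}"
    hence e: "(x - a) \<bullet> (A *v (x - a)) = (x - b) \<bullet> (B *v (x - b))" by simp
    define z where "z = sqrt ((x - a) \<bullet> (A *v (x - a)))"
    have z2: "z^2 = (x - a) \<bullet> (A *v (x - a))" unfolding z_def
      using ok_facts(4)[OF okA] by simp
    have "(x, z) \<in> generated_set L1 L3" using gA z2 by (simp add: hr_cone_def)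
    hence "\<exists>p\<in>L1. \<exists>q\<in>L3. x = midpoint p q \<and> 2 * \<bar>z\<bar> = dist p q"
      unfolding generated_set_def by simp
    then obtain p1 p3 where a1: "p1\<in>L1" "p3\<in>L3" "x = midpoint p1 p3" "2*\<bar>z\<bar> = dist p1 p3"
      by blast
    have "(x, z) \<in> generated_set L2 L4" using gB z2 e by (simp add: hr_cone_def)
    hence "\<exists>p\<in>L2. \<exists>q\<in>L4. x = midpoint p q \<and> 2 * \<bar>z\<bar> = dist p q"
      unfolding generated_set_def by simp
    then obtain p2 p4 where a2: "p2\<in>L2" "p4\<in>L4" "x = midpoint p2 p4" "2*\<bar>z\<bar> = dist p2 p4"
      by blast
    have dd: "dist p1 p3 = dist p2 p4" using a1(4) a2(4) by simp
    show "x \<in> rectangle_locus L1 L3 L2 L4" unfolding rectangle_locus_def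
      by (rule CollectI, rule bexI[OF _ a1(1)], rule bexI[OF _ a1(2)], rule bexI[OF _ a2(1)],
          rule bexI[OF _ a2(2)]) (simp only: a1(3)[symmetric] a2(3)[symmetric] dd simp_thms)
  qed
qed

lemma poly_id:
  fixes A11 A12 A22 B11 B12 B22 x1 x2 a1 a2 b1 b2 m1 m2 :: real
  shows "((x1-m1)*((A11-B11)*(x1-m1) + (A12-B12)*(x2-m2)) + (x2-m2)*((A12-B12)*(x1-m1) + (A22-B22)*(x2-m2))
     - (((A11*a1 + A12*a2) - (B11*b1 + B12*b2))*m1 + ((A12*a1 + A22*a2) - (B12*b1 + B22*b2))*m2
        - (a1*(A11*a1+A12*a2) + a2*(A12*a1+A22*a2)) + (b1*(B11*b1+B12*b2) + b2*(B12*b1+B22*b2))))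
   - ((x1-a1)*(A11*(x1-a1) + A12*(x2-a2)) + (x2-a2)*(A12*(x1-a1) + A22*(x2-a2))
     - ((x1-b1)*(B11*(x1-b1) + B12*(x2-b2)) + (x2-b2)*(B12*(x1-b1) + B22*(x2-b2))))
   = (m1 - 2*x1)*((A11-B11)*m1 + (A12-B12)*m2 - ((A11*a1 + A12*a2) - (B11*b1 + B12*b2)))
   + (m2 - 2*x2)*((A12-B12)*m1 + (A22-B22)*m2 - ((A12*a1 + A22*a2) - (B12*b1 + B22*b2)))"
  by (simp add: algebra_simps)

lemma vec_id:
  fixes A B :: "real^2^2" and x a b m :: "real^2"
  assumes sA: "A$1$2 = A$2$1" and sB: "B$1$2 = B$2$1" and Cm: "(A-B) *v m = A *v a - B *v b"
  shows "(x-a) \<bullet> (A*v(x-a)) = (x-b) \<bullet> (B*v(x-b)) \<longleftrightarrow>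
    (x-m) \<bullet> ((A-B)*v(x-m)) = (A*v a - B*v b) \<bullet> m - a \<bullet> (A*v a) + b \<bullet> (B*v b)"
proof -
  have h1: "(A$1$1-B$1$1)*m$1 + (A$1$2-B$1$2)*m$2 - ((A$1$1*a$1 + A$1$2*a$2) - (B$1$1*b$1 + B$1$2*b$2)) = 0"
    using arg_cong[OF Cm, of "\<lambda>v. v$1"] by (simp add: matrix_vector_mult_def sum_2)
  have h2: "(A$1$2-B$1$2)*m$1 + (A$2$2-B$2$2)*m$2 - ((A$1$2*a$1 + A$2$2*a$2) - (B$1$2*b$1 + B$2$2*b$2)) = 0"
    using arg_cong[OF Cm, of "\<lambda>v. v$2"] sA sB by (simp add: matrix_vector_mult_def sum_2)
  note P = poly_id[of "x$1" "m$1" "A$1$1" "B$1$1" "A$1$2" "B$1$2" "x$2" "m$2" "A$2$2" "B$2$2" "a$1" "a$2" "b$1" "b$2"]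
  show ?thesis
    unfolding inner_vec_def matrix_vector_mult_def sum_2 vec_lambda_beta vector_minus_component inner_real_def sA[symmetric] sB[symmetric]
    using P h1 h2 by (simp only: mult_zero_right add_0) linarith
qed

theorem lemma4p5:
  fixes L1 L3 L2 L4 :: "(real^2) set" and a b :: "real^2" and A B :: "real^2^2"
  assumes "crossing_pair L1 L3 a" and "crossing_pair L2 L4 b"
    and "is_cone_matrix L1 L3 a A" and "is_cone_matrix L2 L4 b B"
    and "A \<noteq> B"
  shows "invertible (A - B) \<and>
    rectangle_locus L1 L3 L2 L4 =
      {x. (x - matrix_inv (A - B) *v (A *v a - B *v b)) \<bullet>
            ((A - B) *v (x - matrix_inv (A - B) *v (A *v a - B *v b)))
          = (A *v a - B *v b) \<bullet> (matrix_inv (A - B) *v (A *v a - B *v b))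
            - a \<bullet> (A *v a) + b \<bullet> (B *v b)}"
proof -
  have okA: "cone_matrix_ok A" and okB: "cone_matrix_ok B"
    using assms(3,4) unfolding is_cone_matrix_def by auto
  have inv: "invertible (A - B)" using det_diff[OF okA okB assms(5)] .
  define C where "C = A - B"
  define c where "c = A *v a - B *v b"
  define m where "m = matrix_inv C *v c"
  have "C ** matrix_inv C = mat 1"
    using inv unfolding C_def invertible_def matrix_inv_def by (rule someI_ex[THEN conjunct1])
  hence Cm: "C *v m = c" unfolding m_def by (metis matrix_vector_mul_assoc matrix_vector_mul_lid)
  have sA: "A$1$2 = A$2$1" and sB: "B$1$2 = B$2$1" using ok_facts(1) okA okB by auto
  have key: "(x - a) \<bullet> (A *v (x - a)) = (x - b) \<bullet> (B *v (x - b)) \<longleftrightarrow>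
     (x - m) \<bullet> (C *v (x - m)) = c \<bullet> m - a \<bullet> (A *v a) + b \<bullet> (B *v b)" for x
    using vec_id[OF sA sB, of m a b x] Cm unfolding C_def c_def by simp
  show ?thesis
  proof (rule conjI[OF inv])
    have "rectangle_locus L1 L3 L2 L4 = {x. (x - a) \<bullet> (A *v (x - a)) = (x - b) \<bullet> (B *v (x - b))}"
      by (rule locus_eq[OF assms(3,4)])
    also have "\<dots> = {x. (x - m) \<bullet> (C *v (x - m)) = c \<bullet> m - a \<bullet> (A *v a) + b \<bullet> (B *v b)}"
      using key by blast
    also have "\<dots> = {x. (x - m) \<bullet> (C *v (x - m)) = c \<bullet> (matrix_inv C *v c) - a \<bullet> (A *v a) + b \<bullet> (B *v b)}"
      unfolding m_def ..
    finally show "rectangle_locus L1 L3 L2 L4 =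
      {x. (x - matrix_inv (A - B) *v (A *v a - B *v b)) \<bullet>
            ((A - B) *v (x - matrix_inv (A - B) *v (A *v a - B *v b)))
          = (A *v a - B *v b) \<bullet> (matrix_inv (A - B) *v (A *v a - B *v b))
            - a \<bullet> (A *v a) + b \<bullet> (B *v b)}"
      unfolding m_def C_def c_def .
  qed
qed

end
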